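(* Under the setup in the context, for every arm $j\in\{1,\dots,K\}$ and every $\delta>0$, $$\bigcup_{i=1}^{\infty}\bigl\{|\tilde\mu_{j,i}-\mu_j|>U(i,\delta)\bigr\}\;\subseteq\;\bigcup_{i=1}^{\infty}\bigl\{|\hat\mu_{j,i}-\mu_j|>U'(i,\delta)\bigr\}.$$
   Context: There are $K$ arms. For each arm $j\in[K]=\{1,\dots,K\}$, the rewards $r_{j,1},r_{j,2},\dots$ are i.i.d. real random variables with values in a fixed interval $[a,b]$ and mean $\mu_j$, and they are $\sigma^2$-subgaussian in the sense that $\mathbb P(|r_{j,k}-\mu_j|>t)\le 2e^{-t^2/(2\sigma^2)}$ for all $t>0$. Rewards of different arms are independent. Fix integers $B\ge 1$ and $\alpha\ge 2$, and set $t_i=\alpha^i$ for $i\ge1$. For $\delta>0$ and $i\ge 1$ define $$U'(i,\delta)=\sigma\sqrt{\frac{2\log(4Kt_i^2/\delta)}{t_i}},$$ and define $U(i,\delta)$ recursively by $U(0,\delta)=b-a$ and $$U(i,\delta)=\frac{1}{2^B}\bigl[U'(i,\delta)+U(i-1,\delta)\bigr]+U'(i,\delta)\quad(i\ge1).$$ Let $\hat\mu_{j,i}=\frac1{t_i}\sum_{k=1}^{t_i}r_{j,k}$ be the empirical mean of the first $t_i$ rewards of arm $j$. Quantizer: for a real interval $[\ell,u]$, divide it into $2^B$ consecutive bins of equal width $(u-\ell)/2^B$; for any $x\in\mathbb R$ (whether or not $x\in[\ell,u]$), $Q_{[\ell,u]}(x)$ denotes the midpoint of a bin whose midpoint is nearest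 to $x$ (so $|Q_{[\ell,u]}(x)-x|\le (u-\ell)/2^{B+1}$ whenever $x\in[\ell,u]$). Decoded estimates: $\tilde\mu_{j,0}$ is drawn uniformly from $[a,b]$, and for $i\ge1$, $$\tilde\mu_{j,i}=Q_{I_{j,i}}(\hat\mu_{j,i}),\qquad I_{j,i}=\bigl[\tilde\mu_{j,i-1}-U(i-1,\delta)-U'(i,\delta),\ \tilde\mu_{j,i-1}+U(i-1,\delta)+U'(i,\delta)\bigr].$$ *)

theory Defs
  imports "HOL-Probability.Probability"
begin

definition tlen :: "nat \<Rightarrow> nat \<Rightarrow> nat" where
  "tlen \<alpha> i = \<alpha> ^ i"

definition Uprime :: "real \<Rightarrow> nat \<Rightarrow> nat \<Rightarrow> real \<Rightarrow> nat \<Rightarrow> real" where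
  "Uprime \<sigma> K \<alpha> \<delta> i =
     \<sigma> * sqrt (2 * ln (4 * real K * (real (tlen \<alpha> i))\<^sup>2 / \<delta>) / real (tlen \<alpha> i))"

primrec Urad :: "real \<Rightarrow> real \<Rightarrow> real \<Rightarrow> nat \<Rightarrow> nat \<Rightarrow> nat \<Rightarrow> real \<Rightarrow> nat \<Rightarrow> real" where
  "Urad a b \<sigma> K \<alpha> B \<delta> 0 = b - a"
| "Urad a b \<sigma> K \<alpha> B \<delta> (Suc i) =
     (Uprime \<sigma> K \<alpha> \<delta> (Suc i) + Urad a b \<sigma> K \<alpha> B \<delta> i) / 2 ^ B + Uprime \<sigma> K \<alpha> \<delta> (Suc i)"

definition emp_mean :: "(nat \<Rightarrow> nat \<Rightarrow> 'a \<Rightarrow> real) \<Rightarrow> nat \<Rightarrow> nat \<Rightarrow> nat \<Rightarrow> 'a \<Rightarrow> real" where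
  "emp_mean r \<alpha> j i \<omega> = (\<Sum>k = 1..tlen \<alpha> i. r j k \<omega>) / real (tlen \<alpha> i)"

definition bin_mids :: "real \<Rightarrow> real \<Rightarrow> nat \<Rightarrow> real set" where
  "bin_mids l u B = {l + (real k + 1/2) * (u - l) / 2 ^ B | k. k < 2 ^ B}"

text \<open>y is an admissible value of Q_[l,u](x): a bin midpoint nearest to x.\<close>
definition is_quant :: "real \<Rightarrow> real \<Rightarrow> nat \<Rightarrow> real \<Rightarrow> real \<Rightarrow> bool" where
  "is_quant l u B x y \<longleftrightarrow> y \<in> bin_mids l u B \<and> (\<forall>m \<in> bin_mids l u B. \<bar>y - x\<bar> \<le> \<bar>m - x\<bar>)"

end

theory Submission
  imports Defs
begin
lemma quant_err:
  fixes l u x y :: real and B :: nat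
  assumes "l \<le> x" "x \<le> u" "is_quant l u B x y"
  shows "\<bar>y - x\<bar> \<le> (u - l) / 2 ^ (Suc B)"
proof -
  define w where "w = (u - l) / 2 ^ B"
  have w0: "w \<ge> 0" using assms unfolding w_def by simp
  have yb: "y \<in> bin_mids l u B" and ymin: "\<forall>m \<in> bin_mids l u B. \<bar>y - x\<bar> \<le> \<bar>m - x\<bar>"
    using assms(3) unfolding is_quant_def by auto
  have mid: "\<And>k::nat. l + (real k + 1/2) * (u - l) / 2 ^ B = l + (real k + 1/2) * w"
    unfolding w_def by simp
  have half: "(u - l) / 2 ^ (Suc B) = w / 2" unfolding w_def by simp
  show ?thesis
  proof (cases "w = 0")
    case True
    then have ul: "u = l" unfolding w_def by simp
    then have "x = l" using assms by simp
    from yb obtain k where "y = l + (real k + 1/2) * (u - l) / 2 ^ B" unfolding bin_mids_def by auto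
    then have "y = l" using ul by simp
    then show ?thesis using \<open>x = l\<close> ul by simp
  next
    case False
    then have wp: "w > 0" using w0 by simp
    define t where "t = (x - l) / w"
    have t0: "t \<ge> 0" using wp assms unfolding t_def by simp
    have "x - l \<le> 2 ^ B * w" unfolding w_def using assms by simp
    then have tB: "t \<le> 2 ^ B" unfolding t_def using wp by (simp add: divide_le_eq mult.commute)
    define k where "k = nat (min (floor t) (2 ^ B - 1))"
    have kB: "k < 2 ^ B"
    proof -
      have "min (floor t) (2 ^ B - 1) < (2::int) ^ B" by simp
      moreover have "floor t \<ge> 0" using t0 by simp
      ultimately have "int k < 2 ^ B" unfolding k_def by simp
      then show ?thesis by (simp add: of_nat_less_iff[symmetric])
    qed
    have kt: "\<bar>real k + 1/2 - t\<bar> \<le> 1/2"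
    proof (cases "floor t \<le> 2 ^ B - 1")
      case True
      then have "k = nat (floor t)" unfolding k_def by simp
      then have "real k = of_int (floor t)" using t0 by simp
      then show ?thesis using floor_correct[of t] by linarith
    next
      case False
      then have "floor t \<ge> 2 ^ B" by simp
      then have "t \<ge> 2 ^ B" using le_floor_iff[of "2^B" t] by simp
      then have tt: "t = 2 ^ B" using tB by simp
      have "k = nat (2 ^ B - 1)" unfolding k_def using False by simp
      then have "real k = 2 ^ B - 1"
        by (simp add: of_nat_diff)
      then show ?thesis using tt by simp
    qed
    define m where "m = l + (real k + 1/2) * w"
    have mb: "m \<in> bin_mids l u B" unfolding bin_mids_def m_def using kB mid[of k] by (metis (mono_tags, lifting) mem_Collect_eq)
    have "m - x = (real k + 1/2 - t) * w" unfolding m_def t_def using wp by (simp add: field_simps)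
    then have "\<bar>m - x\<bar> = \<bar>real k + 1/2 - t\<bar> * w" using wp by (simp add: abs_mult)
    also have "\<dots> \<le> 1/2 * w" using kt wp by (intro mult_right_mono) auto
    finally have "\<bar>m - x\<bar> \<le> w / 2" by simp
    moreover have "\<bar>y - x\<bar> \<le> \<bar>m - x\<bar>" using ymin mb by blast
    ultimately show ?thesis unfolding half by linarith
  qed
qed

theorem lemma1:
  fixes M :: "'a measure"
    and K B \<alpha> :: nat and a b \<sigma> \<delta> :: real
    and r :: "nat \<Rightarrow> nat \<Rightarrow> 'a \<Rightarrow> real"
    and \<mu> :: "nat \<Rightarrow> real"
    and \<mu>t :: "nat \<Rightarrow> nat \<Rightarrow> 'a \<Rightarrow> real"
    and j :: nat
  assumes "prob_space M"
    and "a < b" and "\<sigma> > 0" and "B \<ge> 1" and "\<alpha> \<ge> 2"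
    and rv: "\<And>j' k. j' \<in> {1..K} \<Longrightarrow> k \<ge> 1 \<Longrightarrow> r j' k \<in> borel_measurable M"
    and range: "\<And>j' k \<omega>. j' \<in> {1..K} \<Longrightarrow> k \<ge> 1 \<Longrightarrow> \<omega> \<in> space M \<Longrightarrow> r j' k \<omega> \<in> {a..b}"
    and indep: "prob_space.indep_vars M (\<lambda>_. borel) (\<lambda>(j', k). r j' k) ({1..K} \<times> {1..})"
    and ident: "\<And>j' k. j' \<in> {1..K} \<Longrightarrow> k \<ge> 1 \<Longrightarrow> distr M borel (r j' k) = distr M borel (r j' 1)"
    and mean: "\<And>j' k. j' \<in> {1..K} \<Longrightarrow> k \<ge> 1 \<Longrightarrow> prob_space.expectation M (r j' k) = \<mu> j'"
    and subg: "\<And>j' k t. j' \<in> {1..K} \<Longrightarrow> k \<ge> 1 \<Longrightarrow> t > 0 \<Longrightarrow>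
       measure M {\<omega> \<in> space M. \<bar>r j' k \<omega> - \<mu> j'\<bar> > t} \<le> 2 * exp (- t\<^sup>2 / (2 * \<sigma>\<^sup>2))"
    and init_rv: "\<And>j'. j' \<in> {1..K} \<Longrightarrow> \<mu>t j' 0 \<in> borel_measurable M"
    and init_unif: "\<And>j'. j' \<in> {1..K} \<Longrightarrow> distr M lborel (\<mu>t j' 0) = uniform_measure lborel {a..b}"
    and init_range: "\<And>j' \<omega>. j' \<in> {1..K} \<Longrightarrow> \<omega> \<in> space M \<Longrightarrow> \<mu>t j' 0 \<omega> \<in> {a..b}"
    and decode: "\<And>j' i \<omega>. j' \<in> {1..K} \<Longrightarrow> i \<ge> 1 \<Longrightarrow> \<omega> \<in> space M \<Longrightarrow>
       is_quant
         (\<mu>t j' (i - 1) \<omega> - Urad a b \<sigma> K \<alpha> B \<delta> (i - 1) - Uprime \<sigma> K \<alpha> \<delta> i)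
         (\<mu>t j' (i - 1) \<omega> + Urad a b \<sigma> K \<alpha> B \<delta> (i - 1) + Uprime \<sigma> K \<alpha> \<delta> i)
         B (emp_mean r \<alpha> j' i \<omega>) (\<mu>t j' i \<omega>)"
    and "j \<in> {1..K}" and "\<delta> > 0"
  shows "(\<Union>i\<in>{1..}. {\<omega> \<in> space M. \<bar>\<mu>t j i \<omega> - \<mu> j\<bar> > Urad a b \<sigma> K \<alpha> B \<delta> i})
         \<subseteq> (\<Union>i\<in>{1..}. {\<omega> \<in> space M. \<bar>emp_mean r \<alpha> j i \<omega> - \<mu> j\<bar> > Uprime \<sigma> K \<alpha> \<delta> i})"
proof -
  interpret P: prob_space M by fact
  have int: "integrable M (r j 1)"
  proof (rule P.integrable_const_bound[where B="max \<bar>a\<bar> \<bar>b\<bar>"])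
    show "AE x in M. norm (r j 1 x) \<le> max \<bar>a\<bar> \<bar>b\<bar>"
      using range[OF \<open>j \<in> {1..K}\<close>, of 1] by (intro AE_I2) fastforce
  qed (use rv[OF \<open>j \<in> {1..K}\<close>, of 1] in simp)
  have mu_eq: "P.expectation (r j 1) = \<mu> j" using mean[OF \<open>j \<in> {1..K}\<close>, of 1] by simp
  have "a \<le> \<mu> j" unfolding mu_eq[symmetric]
    by (rule P.integral_ge_const[OF int]) (use range[OF \<open>j \<in> {1..K}\<close>, of 1] in \<open>intro AE_I2, auto\<close>)
  moreover have "\<mu> j \<le> b" unfolding mu_eq[symmetric]
    by (rule P.integral_le_const[OF int]) (use range[OF \<open>j \<in> {1..K}\<close>, of 1] in \<open>intro AE_I2, auto\<close>)
  ultimately have muab: "\<mu> j \<in> {a..b}" by simp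
  show ?thesis
  proof (rule subsetI, rule ccontr)
    fix \<omega> assume L: "\<omega> \<in> (\<Union>i\<in>{1..}. {\<omega> \<in> space M. \<bar>\<mu>t j i \<omega> - \<mu> j\<bar> > Urad a b \<sigma> K \<alpha> B \<delta> i})"
      and nR: "\<omega> \<notin> (\<Union>i\<in>{1..}. {\<omega> \<in> space M. \<bar>emp_mean r \<alpha> j i \<omega> - \<mu> j\<bar> > Uprime \<sigma> K \<alpha> \<delta> i})"
    from L have om: "\<omega> \<in> space M" by auto
    have good: "\<And>i. i \<ge> 1 \<Longrightarrow> \<bar>emp_mean r \<alpha> j i \<omega> - \<mu> j\<bar> \<le> Uprime \<sigma> K \<alpha> \<delta> i"
      using nR om by fastforce
    have "\<bar>\<mu>t j i \<omega> - \<mu> j\<bar> \<le> Urad a b \<sigma> K \<alpha> B \<delta> i" for i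
    proof (induction i)
      case 0
      then show ?case using init_range[OF \<open>j \<in> {1..K}\<close> om] muab by auto
    next
      case (Suc i)
      let ?c = "\<mu>t j i \<omega>" and ?U = "Urad a b \<sigma> K \<alpha> B \<delta> i" and ?V = "Uprime \<sigma> K \<alpha> \<delta> (Suc i)"
      let ?x = "emp_mean r \<alpha> j (Suc i) \<omega>"
      have q: "is_quant (?c - ?U - ?V) (?c + ?U + ?V) B ?x (\<mu>t j (Suc i) \<omega>)"
        using decode[OF \<open>j \<in> {1..K}\<close> _ om, of "Suc i"] by simp
      have g: "\<bar>?x - \<mu> j\<bar> \<le> ?V" using good[of "Suc i"] by simp
      have e: "\<bar>\<mu>t j (Suc i) \<omega> - ?x\<bar> \<le> ((?c + ?U + ?V) - (?c - ?U - ?V)) / 2 ^ Suc B"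
        by (rule quant_err[OF _ _ q]) (use Suc.IH g in auto)
      have "((?c + ?U + ?V) - (?c - ?U - ?V)) / 2 ^ Suc B = (?V + ?U) / 2 ^ B" by (simp add: field_simps)
      then show ?case using e g by simp
    qed
    then show False using L by (auto simp: not_less[symmetric])
  qed
qed

end
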